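(* Suppose Assumption 1 holds with parameters $\varepsilon,\alpha\in[1,\infty],k_1$ and a supergradient $g'(x^* )$ that moreover satisfies $g'(x^* )>0$. Then in the asymptotic regime there exist constants $K>0$ and $c_0$ (independent of $c$) such that for every $c\ge c_0$ there is a two-price policy with performance loss at most $K\,c^{1/(\alpha+1)}(\log c)^2$ if $\alpha\in[1,\infty)$, i.e. $\tilde O(c^{1/(\alpha+1)})$, and at most $K(\log c)^2$ if $\alpha=\infty$.
   Context: Setting. Fix $c\in\mathbb N$ (number of identical units of a single reusable resource), an arrival rate $\lambda>0$ and a mean usage duration $d>0$, with $x^*:=c/(\lambda d)\in(0,1)$. Let $g:[0,1]\to\mathbb R$ be concave, non-decreasing, with $g(0)=0$ (the reward function). A stock-dependent policy is a vector $\mathbf x=(x_1,\dots,x_c)\in[0,1]^c$, where $x_j$ is the admission probability used when exactly $j$ units are available (the admission probability is $0$ when no unit is available). Its steady-state distribution is the unique probability vector $\pi=(\pi_0,\dots,\pi_c)$ satisfying $\pi_j\lambda x_j=\pi_{j-1}(c-j+1)/d$ for all $j\in\{1,\dots,c\}$, and its long-run average reward is $\mathcal R(\mathbf x)=\sum_{j=1}^c\pi_j\lambda g(x_j)$. The performance loss of $\mathbf x$ is $\lambda g(x^* )-\mathcal R(\mathbf x)$. A two-price policy with parameters $x_L,x_H\in[0,1]$ and $\tau\in\{1,\dots,c\}$ sets $x_j=x_L$ for $1\le j\le\tau$ and $x_j=x_H$ for $\tau<j\le c$. Asymptotic regime: $x^*\in(0,1)$, $d$ and $g$ are fixed, $c\to\infty$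 and $\lambda=c/(x^*d)$. Assumption 1: there exist $0<\varepsilon<\min\{x^*,1-x^*\}$, $\alpha\in[1,\infty]$, $k_1\ge0$ and a supergradient $g'(x^* )\ge0$ of $g$ at $x^*$ such that $g(x)\ge g(x^* )+g'(x^* )(x-x^* )-k_1|x-x^*|^\alpha$ for all $x\in[x^*-\varepsilon,x^*+\varepsilon]$ (when $\alpha=\infty$, the term $|x-x^*|^\alpha$ is interpreted as $0$). *)

theory Defs
  imports "HOL-Analysis.Analysis"
begin

text \<open>A stock-dependent policy is a function x :: nat => real; only x 1, ..., x c matter
  (x j is the admission probability when exactly j units are available).\<close>

definition is_steady_state ::
  "nat \<Rightarrow> real \<Rightarrow> real \<Rightarrow> (nat \<Rightarrow> real) \<Rightarrow> (nat \<Rightarrow> real) \<Rightarrow> bool" where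
  "is_steady_state c lam d x p \<longleftrightarrow>
     (\<forall>j\<in>{0..c}. 0 \<le> p j) \<and> (\<forall>j>c. p j = 0) \<and> (\<Sum>j=0..c. p j) = 1 \<and>
     (\<forall>j\<in>{1..c}. p j * lam * x j = p (j - 1) * (real c - real j + 1) / d)"

definition steady_state ::
  "nat \<Rightarrow> real \<Rightarrow> real \<Rightarrow> (nat \<Rightarrow> real) \<Rightarrow> nat \<Rightarrow> real" where
  "steady_state c lam d x = (THE p. is_steady_state c lam d x p)"

definition avg_reward ::
  "(real \<Rightarrow> real) \<Rightarrow> nat \<Rightarrow> real \<Rightarrow> real \<Rightarrow> (nat \<Rightarrow> real) \<Rightarrow> real" where
  "avg_reward g c lam d x = (\<Sum>j=1..c. steady_state c lam d x j * lam * g (x j))"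

definition perf_loss ::
  "(real \<Rightarrow> real) \<Rightarrow> nat \<Rightarrow> real \<Rightarrow> real \<Rightarrow> real \<Rightarrow> (nat \<Rightarrow> real) \<Rightarrow> real" where
  "perf_loss g c lam d xstar x = lam * g xstar - avg_reward g c lam d x"

definition two_price_policy :: "real \<Rightarrow> real \<Rightarrow> nat \<Rightarrow> nat \<Rightarrow> real" where
  "two_price_policy xL xH tau = (\<lambda>j. if j \<le> tau then xL else xH)"

end

theory Submission
  imports Defs "HOL-Real_Asymp.Real_Asymp"
begin


fun qq :: "nat \<Rightarrow> real \<Rightarrow> real \<Rightarrow> (nat \<Rightarrow> real) \<Rightarrow> nat \<Rightarrow> real" where
  "qq c lam d x 0 = 1"
| "qq c lam d x (Suc j) = qq c lam d x j * (real c - real j) / (d * lam * x (Suc j))"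

lemma qq_pos:
  assumes "lam > 0" "d > 0" "\<forall>j\<in>{1..c}. x j > 0" "j \<le> c"
  shows "qq c lam d x j > 0"
  using assms(4)
proof (induction j)
  case 0 then show ?case by simp
next
  case (Suc j)
  then have "qq c lam d x j > 0" by simp
  moreover have "real c - real j > 0" using Suc.prems by simp
  moreover have "x (Suc j) > 0" using assms(3) Suc.prems by simp
  ultimately show ?case using assms by simp
qed

lemma steady_state_qq:
  assumes lp: "lam > 0" and dp: "d > 0" and xp: "\<forall>j\<in>{1..c}. x j > 0"
  defines "S \<equiv> (\<Sum>j=0..c. qq c lam d x j)"
  shows "steady_state c lam d x = (\<lambda>j. if j \<le> c then qq c lam d x j / S else 0)"
    and "is_steady_state c lam d x (steady_state c lam d x)"
proof -
  let ?q = "qq c lam d x"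
  let ?p = "\<lambda>j. if j \<le> c then ?q j / S else 0"
  have Spos: "S > 0" unfolding S_def
    using qq_pos[OF lp dp xp] by (intro sum_pos) auto
  have ex: "is_steady_state c lam d x ?p"
    unfolding is_steady_state_def
  proof (intro conjI ballI allI impI)
    fix j assume "j \<in> {0..c}"
    then have "j \<le> c" by simp
    then have "0 < ?q j" using qq_pos[OF lp dp xp] by blast
    then show "0 \<le> ?p j" using Spos by simp
  next
    fix j :: nat assume "c < j" then show "?p j = 0" by simp
  next
    have "(\<Sum>j=0..c. ?p j) = (\<Sum>j=0..c. ?q j / S)" by (intro sum.cong) auto
    also have "\<dots> = 1" using Spos by (simp add: S_def sum_divide_distrib[symmetric])
    finally show "(\<Sum>j=0..c. ?p j) = 1" .
  next
    fix j assume j: "j \<in> {1..c}"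
    then obtain i where i: "j = Suc i" by (cases j) auto
    have xj: "x j > 0" using xp j by auto
    show "?p j * lam * x j = ?p (j - 1) * (real c - real j + 1) / d"
      using j i xj lp dp Spos by (simp add: field_simps)
  qed
  have uniq: "p = ?p" if ss: "is_steady_state c lam d x p" for p
  proof -
    have zero: "\<forall>j>c. p j = 0" and s1: "(\<Sum>j=0..c. p j) = 1"
      and bal: "\<forall>j\<in>{1..c}. p j * lam * x j = p (j - 1) * (real c - real j + 1) / d"
      using ss unfolding is_steady_state_def by auto
    have rec: "p j = p 0 * ?q j" if "j \<le> c" for j
      using that
    proof (induction j)
      case 0 then show ?case by simp
    next
      case (Suc i)
      have b: "p (Suc i) * lam * x (Suc i) = p i * (real c - real i) / d"
        using bal Suc.prems by force
      have xj: "x (Suc i) > 0" using xp Suc.prems by auto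
      have "p (Suc i) = p i * (real c - real i) / (d * lam * x (Suc i))"
        using b xj lp dp by (simp add: field_simps)
      then show ?case using Suc by simp
    qed
    have "1 = (\<Sum>j=0..c. p 0 * ?q j)" using s1 rec by (metis (no_types, lifting) atLeastAtMost_iff sum.cong)
    also have "\<dots> = p 0 * S" by (simp add: S_def sum_distrib_left)
    finally have p0: "p 0 = 1 / S" using Spos by (simp add: field_simps)
    show ?thesis
    proof
      fix j show "p j = ?p j"
        using rec zero p0 by (cases "j \<le> c") auto
    qed
  qed
  have eq: "steady_state c lam d x = ?p" unfolding steady_state_def using ex uniq by (rule the_equality)
  show "steady_state c lam d x = ?p" by (rule eq)
  show "is_steady_state c lam d x (steady_state c lam d x)" using ex eq by simp
qed

lemma flow_identity:
  assumes ss: "is_steady_state c lam d x p" and d: "d > 0"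
  shows "(\<Sum>j=1..c. p j * lam * x j) = (real c - (\<Sum>i=0..c. real i * p i)) / d"
proof -
  have bal: "\<forall>j\<in>{1..c}. p j * lam * x j = p (j - 1) * (real c - real j + 1) / d"
    and s1: "(\<Sum>i=0..c. p i) = 1"
    using ss by (auto simp: is_steady_state_def)
  have "(\<Sum>j=1..c. p j * lam * x j) = (\<Sum>j=1..c. p (j - 1) * (real c - real j + 1) / d)"
    using bal by (intro sum.cong) auto
  also have "\<dots> = (\<Sum>j\<in>Suc ` {0..<c}. p (j - 1) * (real c - real j + 1) / d)"
    by (simp add: atLeastLessThanSuc_atLeastAtMost)
  also have "\<dots> = (\<Sum>i=0..<c. p i * (real c - real i) / d)"
    by (subst sum.reindex) (auto simp: algebra_simps)
  also have "\<dots> = (\<Sum>i=0..c. p i * (real c - real i) / d)"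
    by (simp add: sum.atLeast0_atMost_Suc atLeast0AtMost lessThan_Suc_atMost[symmetric] atLeast0LessThan)
  also have "\<dots> = (real c * (\<Sum>i=0..c. p i) - (\<Sum>i=0..c. real i * p i)) / d"
    by (simp add: sum_subtractf sum_divide_distrib[symmetric] sum_distrib_left algebra_simps)
  finally show ?thesis using s1 by simp
qed

lemma loss_le:
  assumes ss: "is_steady_state c lam d x p" and d: "d > 0" and xs: "xs > 0"
    and lam: "lam = real c / (xs * d)"
    and gl: "\<forall>j\<in>{1..c}. g (x j) \<ge> g xs + g' * (x j - xs) - h"
    and h: "h \<ge> 0" and g': "g' \<ge> 0"
  shows "lam * g xs - (\<Sum>j=1..c. p j * lam * g (x j))
     \<le> p 0 * lam * g xs + lam * h + g' * (\<Sum>i=0..c. real i * p i) / d"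
proof -
  define E where "E = (\<Sum>i=0..c. real i * p i)"
  have nn: "\<forall>j\<in>{0..c}. 0 \<le> p j" and s1: "(\<Sum>i=0..c. p i) = 1"
    using ss by (auto simp: is_steady_state_def)
  have lam0: "lam \<ge> 0" using lam xs d by simp
  have fl: "(\<Sum>j=1..c. p j * lam * x j) = (real c - E) / d"
    using flow_identity[OF ss d] by (simp add: E_def)
  have s1': "(\<Sum>j=1..c. p j) = 1 - p 0"
    using s1 by (simp add: sum.atLeast_Suc_atMost)
  have "(\<Sum>j=1..c. p j * lam * g (x j)) \<ge> (\<Sum>j=1..c. p j * lam * (g xs - g' * xs - h) + g' * (p j * lam * x j))"
  proof (rule sum_mono)
    fix j assume j: "j \<in> {1..c}"
    have "p j * lam \<ge> 0" using nn j lam0 by auto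
    then have "p j * lam * (g xs + g' * (x j - xs) - h) \<le> p j * lam * g (x j)"
      using gl j by (intro mult_left_mono) auto
    then show "p j * lam * (g xs - g' * xs - h) + g' * (p j * lam * x j) \<le> p j * lam * g (x j)"
      by (simp add: algebra_simps)
  qed
  also have "(\<Sum>j=1..c. p j * lam * (g xs - g' * xs - h) + g' * (p j * lam * x j))
      = (\<Sum>j=1..c. p j) * lam * (g xs - g' * xs - h) + g' * (\<Sum>j=1..c. p j * lam * x j)"
    by (simp add: sum.distrib sum_distrib_left sum_distrib_right)
  also have "\<dots> = (1 - p 0) * lam * (g xs - g' * xs - h) + g' * ((real c - E) / d)"
    unfolding fl s1' ..
  finally have R: "(\<Sum>j=1..c. p j * lam * g (x j)) \<ge> (1 - p 0) * lam * (g xs - g' * xs - h) + g' * ((real c - E) / d)" .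
  have lx: "lam * xs = real c / d" using lam xs d by simp
  have p0: "p 0 \<ge> 0" using nn by auto
  have a1: "p 0 * (lam * h) \<ge> 0" using p0 lam0 h by simp
  have a2: "p 0 * (g' * (real c / d)) \<ge> 0" using p0 g' d by simp
  have eq: "(1 - p 0) * lam * (g xs - g' * xs - h) + g' * ((real c - E) / d)
      = lam * g xs - p 0 * lam * g xs - lam * h + p 0 * (lam * h) + p 0 * (g' * (real c / d)) - g' * E / d"
    unfolding lam using xs d by (simp add: field_simps)
  show ?thesis using R eq a1 a2 unfolding E_def[symmetric] by linarith
qed



lemma sum_k_rk:
  fixes r :: real assumes r: "0 \<le> r" "r < 1"
  shows "(\<Sum>k<n. real k * r ^ k) + (real n * r ^ n * (1 - r) + r ^ (Suc n)) / (1 - r)^2 = r / (1 - r)^2"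
proof (induction n)
  case 0 then show ?case by simp
next
  case (Suc n)
  have ne: "(1 - r) \<noteq> 0" using r by simp
  have "real n * r ^ n + (real (Suc n) * r ^ Suc n * (1 - r) + r ^ Suc (Suc n)) / (1 - r)^2
      = (real n * r ^ n * (1 - r) + r ^ Suc n) / (1 - r)^2"
  proof -
    have D: "(1 - r)^2 \<noteq> 0" using ne by simp
    have num: "real n * r ^ n * (1 - r)^2 + (real (Suc n) * r ^ Suc n * (1 - r) + r ^ Suc (Suc n))
       = real n * r ^ n * (1 - r) + r ^ Suc n"
      by (simp add: algebra_simps power2_eq_square)
    show ?thesis using D num by (simp add: add_divide_eq_iff)
  qed
  then show ?case using Suc by simp
qed

lemma sum_k_rk_le:
  fixes r :: real assumes r: "0 \<le> r" "r < 1"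
  shows "(\<Sum>k=0..n. real k * r ^ k) \<le> r / (1 - r)^2"
proof -
  have "0 \<le> (real (Suc n) * r ^ (Suc n) * (1 - r) + r ^ (Suc (Suc n))) / (1 - r)^2"
    using r by simp
  then show ?thesis using sum_k_rk[OF r, of "Suc n"] by (simp add: atLeast0AtMost lessThan_Suc_atMost)
qed

lemma q_bounds:
  fixes q :: "nat \<Rightarrow> real" and c tau :: nat and u :: real
  assumes q0: "q 0 = 1"
    and hL: "\<forall>j<tau. q (Suc j) = q j * ((real c - real j) / (real c * (1 - u)))"
    and hH: "\<forall>j. tau \<le> j \<longrightarrow> j < c \<longrightarrow> q (Suc j) = q j * ((real c - real j) / (real c * (1 + u)))"
    and u: "0 < u" "u \<le> 1/2"
    and tau: "1 \<le> tau" "tau \<le> c" "real tau \<le> real c * u / 2"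
    and tauL: "4 * ln (real c) \<le> real tau * u"
    and c2: "2 \<le> c"
  shows "real c \<le> (\<Sum>j=0..c. q j)"
    and "(\<Sum>j=0..c. real j * q j) \<le> (real tau + 3/u) * (\<Sum>j=0..c. q j)"
proof -
  define S where "S = (\<Sum>j=0..c. q j)"
  have cpos: "real c > 0" using c2 by simp
  have qnn: "q j \<ge> 0" if "j \<le> c" for j
    using that
  proof (induction j)
    case 0 then show ?case using q0 by simp
  next
    case (Suc j)
    then have qj: "q j \<ge> 0" by simp
    have cj: "real c - real j \<ge> 0" using Suc.prems by simp
    show ?case
    proof (cases "j < tau")
      case True
      then show ?thesis using hL qj cj u cpos by simp
    next
      case False
      then show ?thesis using hH qj cj u cpos Suc.prems by simp
    qed
  qed
  have qi: "q k \<ge> (1 + u/2) ^ k" if "k \<le> tau" for k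
    using that
  proof (induction k)
    case 0 then show ?case using q0 by simp
  next
    case (Suc k)
    then have qk: "q k \<ge> (1 + u/2) ^ k" by simp
    have kt: "k < tau" using Suc.prems by simp
    have ck: "real c - real k \<ge> real c * (1 - u/2)"
    proof -
      have "real k \<le> real tau" using kt by simp
      moreover have "real c * (1 - u/2) = real c - real c * u / 2" by (simp add: algebra_simps)
      ultimately show ?thesis using tau(3) by linarith
    qed
    have "(1 + u/2) * (real c * (1 - u)) \<le> real c * (1 - u/2)"
      using cpos u by (simp add: algebra_simps)
    also have "\<dots> \<le> real c - real k" using ck .
    finally have f: "1 + u/2 \<le> (real c - real k) / (real c * (1 - u))"
      using cpos u by (simp add: field_simps)
    have "(1 + u/2) ^ Suc k = (1 + u/2)^k * (1 + u/2)" by simp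
    also have "\<dots> \<le> q k * ((real c - real k) / (real c * (1 - u)))"
      using qk f u kt tau qnn[of k] by (intro mult_mono) auto
    also have "\<dots> = q (Suc k)" using hL kt by simp
    finally show ?case .
  qed
  have lnb: "ln (1 + u/2) \<ge> u/4"
  proof -
    have "u/2 - (u/2)^2 \<le> ln (1 + u/2)" using u by (intro ln_one_plus_pos_lower_bound) auto
    moreover have "u/4 \<le> u/2 - (u/2)^2" using u by (simp add: power2_eq_square field_simps)
    ultimately show ?thesis by linarith
  qed
  have "real c = exp (ln (real c))" using cpos by simp
  also have "\<dots> \<le> exp (real tau * (u/4))" using tauL by simp
  also have "\<dots> \<le> exp (real tau * ln (1 + u/2))" using lnb by (intro exp_mono mult_left_mono) auto
  also have "\<dots> = (1 + u/2) ^ tau" using u by (simp add: exp_of_nat_mult)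
  also have "\<dots> \<le> q tau" using qi by simp
  finally have qtau: "real c \<le> q tau" .
  have qtS: "q tau \<le> S" unfolding S_def
    using tau qnn by (intro member_le_sum) auto
  show "real c \<le> (\<Sum>j=0..c. q j)" using qtau qtS S_def by simp
  have qii: "q (tau - k) \<ge> q tau * (1 - u) ^ k" if "k \<le> tau" for k
    using that
  proof (induction k)
    case 0 then show ?case by simp
  next
    case (Suc k)
    define j where "j = tau - Suc k"
    have jt: "j < tau" and sj: "Suc j = tau - k" using Suc.prems by (auto simp: j_def)
    have qj: "q j \<ge> 0" using qnn jt tau by simp
    have "q (Suc j) = q j * ((real c - real j) / (real c * (1 - u)))" using hL jt by simp
    also have "\<dots> \<le> q j * (1 / (1 - u))"
    proof -
      have "(real c - real j) / real c \<le> 1" using cpos by simp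
      then have "((real c - real j) / real c) / (1 - u) \<le> 1 / (1 - u)"
        using u by (intro divide_right_mono) auto
      then show ?thesis using qj by (intro mult_left_mono) auto
    qed
    finally have "q (Suc j) * (1 - u) \<le> q j" using u by (simp add: field_simps)
    moreover have "q tau * (1 - u) ^ k * (1 - u) \<le> q (Suc j) * (1 - u)"
      using Suc sj u by (intro mult_right_mono) auto
    ultimately have "q tau * (1 - u) ^ k * (1 - u) \<le> q j" by linarith
    then show ?case by (simp add: j_def[symmetric] algebra_simps)
  qed
  have geo: "(1 - u) ^ Suc tau \<le> 1/2"
  proof -
    have "(1 - u) ^ Suc tau \<le> exp (- u) ^ Suc tau"
      using u by (intro power_mono) (auto simp: exp_ge_add_one_self[of "-u", simplified])
    also have "\<dots> = exp (- (real (Suc tau) * u))" by (simp add: exp_of_nat_mult[symmetric] exp_add[symmetric] algebra_simps)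
    also have "\<dots> \<le> exp (-1)"
    proof -
      have "ln (real c) \<ge> ln 2" using c2 by simp
      moreover have "ln (2::real) \<ge> 1/4"
      proof -
        have "1/2 - (1/2)^2 \<le> ln (1 + 1/2::real)" by (intro ln_one_plus_pos_lower_bound) auto
        then have "1/4 \<le> ln (3/2::real)" by (simp add: power2_eq_square)
        moreover have "ln (3/2::real) \<le> ln 2" by simp
        ultimately show ?thesis by linarith
      qed
      ultimately have "real tau * u \<ge> 1" using tauL by linarith
      then show ?thesis using u by (simp add: algebra_simps)
    qed
    also have "\<dots> \<le> 1/2"
    proof -
      have "exp (1::real) \<ge> 2" using exp_ge_add_one_self[of 1] by simp
      then show ?thesis by (simp add: exp_minus field_simps)
    qed
    finally show ?thesis .
  qed
  have "q tau * ((1 - (1 - u) ^ Suc tau) / u) = q tau * (\<Sum>k=0..tau. (1 - u) ^ k)"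
    using u by (simp add: sum_gp_strict atLeast0AtMost lessThan_Suc_atMost[symmetric]) (simp add: field_simps)
  also have "\<dots> = (\<Sum>k=0..tau. q tau * (1 - u) ^ k)" by (simp add: sum_distrib_left)
  also have "\<dots> \<le> (\<Sum>k=0..tau. q (tau - k))" using qii by (intro sum_mono) auto
  also have "\<dots> = (\<Sum>j=0..tau. q j)"
    by (subst sum.atLeastAtMost_rev) simp
  also have "\<dots> \<le> S" unfolding S_def using tau qnn by (intro sum_mono2) auto
  finally have "q tau * ((1 - (1 - u) ^ Suc tau) / u) \<le> S" .
  moreover have "q tau * (1 / (2 * u)) \<le> q tau * ((1 - (1 - u) ^ Suc tau) / u)"
    using geo u qtau cpos by (intro mult_left_mono) (auto simp: field_simps)
  ultimately have S2: "q tau \<le> 2 * u * S" using u by (simp add: field_simps)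
  define r where "r = 1 / (1 + u)"
  have r: "0 \<le> r" "r < 1" using u by (auto simp: r_def)
  have qiii: "q (tau + k) \<le> q tau * r ^ k" if "tau + k \<le> c" for k
    using that
  proof (induction k)
    case 0 then show ?case by simp
  next
    case (Suc k)
    have qk: "q (tau + k) \<ge> 0" using qnn Suc.prems by simp
    have "q (Suc (tau + k)) = q (tau + k) * ((real c - real (tau + k)) / (real c * (1 + u)))"
      using hH Suc.prems by simp
    also have "\<dots> \<le> q (tau + k) * r"
    proof -
      have "(real c - real (tau + k)) / real c \<le> 1" using cpos by simp
      then have "((real c - real (tau + k)) / real c) / (1 + u) \<le> 1 / (1 + u)"
        using u by (intro divide_right_mono) auto
      then show ?thesis using qk unfolding r_def by (intro mult_left_mono) auto
    qed
    also have "\<dots> \<le> q tau * r ^ k * r" using Suc r by (intro mult_right_mono) auto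
    finally show ?case by (simp add: algebra_simps)
  qed
  have "(\<Sum>j=0..c. real j * q j) \<le> (\<Sum>j=0..c. real tau * q j + real (j - tau) * q j)"
  proof (intro sum_mono)
    fix j assume "j \<in> {0..c}"
    then have qj: "q j \<ge> 0" using qnn by simp
    have "real j \<le> real tau + real (j - tau)" by linarith
    then have "real j * q j \<le> (real tau + real (j - tau)) * q j" using qj by (intro mult_right_mono)
    then show "real j * q j \<le> real tau * q j + real (j - tau) * q j" by (simp add: algebra_simps)
  qed
  also have "\<dots> = real tau * S + (\<Sum>j=0..c. real (j - tau) * q j)"
    by (simp add: sum.distrib sum_distrib_left S_def)
  finally have T0: "(\<Sum>j=0..c. real j * q j) \<le> real tau * S + (\<Sum>j=0..c. real (j - tau) * q j)" .
  have "(\<Sum>j=0..c. real (j - tau) * q j) = (\<Sum>j=tau..c. real (j - tau) * q j)"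
  proof -
    have "{0..c} = {0..<tau} \<union> {tau..c}" using tau by auto
    then have "(\<Sum>j=0..c. real (j - tau) * q j) = (\<Sum>j=0..<tau. real (j - tau) * q j) + (\<Sum>j=tau..c. real (j - tau) * q j)"
      by (simp add: sum.union_disjoint ivl_disj_int)
    then show ?thesis by simp
  qed
  also have "(\<Sum>j=tau..c. real (j - tau) * q j) = (\<Sum>k=0..c - tau. real k * q (tau + k))"
  proof -
    have "(\<Sum>j=tau..c. real (j - tau) * q j) = (\<Sum>j=0 + tau..(c - tau) + tau. real (j - tau) * q j)"
      using tau by simp
    also have "\<dots> = (\<Sum>k=0..c - tau. real k * q (tau + k))"
      by (subst sum.shift_bounds_cl_nat_ivl) (simp add: add.commute)
    finally show ?thesis .
  qed
  also have "\<dots> \<le> (\<Sum>k=0..c - tau. q tau * (real k * r ^ k))"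
    using qiii tau by (intro sum_mono) (auto intro!: mult_left_mono simp: mult.left_commute)
  also have "\<dots> = q tau * (\<Sum>k=0..c - tau. real k * r ^ k)" by (simp add: sum_distrib_left)
  also have "\<dots> \<le> q tau * (r / (1 - r)^2)"
    using qtau cpos sum_k_rk_le[OF r] by (intro mult_left_mono) auto
  also have "r / (1 - r)^2 = (1 + u) / u^2"
  proof -
    have e: "1 - r = u / (1 + u)" using u by (simp add: r_def field_simps)
    have "r / (1 - r)^2 = (1 / (1 + u)) * ((1 + u)^2 / u^2)"
      unfolding e by (simp add: power_divide r_def)
    also have "\<dots> = (1 + u) / u^2" using u by (simp add: power2_eq_square)
    finally show ?thesis .
  qed
  finally have T: "(\<Sum>j=0..c. real j * q j) \<le> real tau * S + q tau * ((1 + u) / u^2)" using T0 by linarith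
  have "q tau * ((1 + u) / u^2) \<le> 2 * u * S * ((1 + u) / u^2)"
    using S2 u by (intro mult_right_mono) auto
  also have "\<dots> = S * (2 * (1 + u) / u)" using u by (simp add: field_simps power2_eq_square)
  also have "\<dots> \<le> S * (3 / u)"
    using qtau qtS cpos u by (intro mult_left_mono) (auto simp: field_simps)
  finally show "(\<Sum>j=0..c. real j * q j) \<le> (real tau + 3/u) * (\<Sum>j=0..c. q j)"
    using T by (simp add: S_def algebra_simps)
qed



lemma main_bound:
  fixes g :: "real \<Rightarrow> real" and c :: nat
  assumes xs: "0 < xs" and d: "0 < d" and gxs: "g xs \<ge> 0" and g': "g' \<ge> 0"
    and c2: "2 \<le> c" and u: "0 < u" "u \<le> 1/2" and xH1: "xs * (1 + u) \<le> 1"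
    and L1: "1 \<le> ln (real c)" and cu: "10 * ln (real c) \<le> real c * u^2"
    and h: "h \<ge> 0"
    and gL: "g (xs * (1 - u)) \<ge> g xs + g' * (xs * (1 - u) - xs) - h"
    and gH: "g (xs * (1 + u)) \<ge> g xs + g' * (xs * (1 + u) - xs) - h"
  shows "\<exists>xL\<in>{0..1}. \<exists>xH\<in>{0..1}. \<exists>tau\<in>{1..c}.
     perf_loss g c (real c / (xs * d)) d xs (two_price_policy xL xH tau)
       \<le> g xs / (xs * d) + real c * h / (xs * d) + 8 * g' * ln (real c) / (u * d)"
proof -
  define L where "L = ln (real c)"
  define tau where "tau = nat \<lceil>4 * L / u\<rceil>"
  define lam where "lam = real c / (xs * d)"
  define xL where "xL = xs * (1 - u)"
  define xH where "xH = xs * (1 + u)"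
  define x where "x = two_price_policy xL xH tau"
  have cpos: "real c > 0" using c2 by simp
  have lam: "lam > 0" using cpos xs d by (simp add: lam_def)
  have Lu: "4 * L / u > 0" using L1 u by (simp add: L_def)
  have tau_ge: "real tau \<ge> 4 * L / u" unfolding tau_def using Lu by linarith
  have tau_le: "real tau \<le> 4 * L / u + 1" unfolding tau_def using Lu by linarith
  have "1 \<le> L / u" using L1 u by (simp add: L_def field_simps) 
  moreover have "5 * L / u = 4 * L / u + L / u" by (simp add: field_simps)
  ultimately have tau_le2: "real tau \<le> 5 * L / u" using tau_le by linarith
  have "5 * L / u \<le> real c * u / 2" using cu u by (simp add: L_def field_simps power2_eq_square)
  then have tau_cu: "real tau \<le> real c * u / 2" using tau_le2 by linarith
  have "real tau > 0" using tau_ge Lu by linarith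
  then have tau1: "1 \<le> tau" by simp
  have "real c * u / 2 \<le> real c" using cpos u by simp
  then have tauc: "tau \<le> c" using tau_cu by linarith
  have tauL: "4 * ln (real c) \<le> real tau * u" using tau_ge u by (simp add: L_def field_simps)
  have xpos: "\<forall>j\<in>{1..c}. x j > 0" using xs u by (auto simp: x_def two_price_policy_def xL_def xH_def)
  define q where "q = qq c lam d x"
  define S where "S = (\<Sum>j=0..c. q j)"
  have ssq: "steady_state c lam d x = (\<lambda>j. if j \<le> c then q j / S else 0)"
    using steady_state_qq(1)[OF lam d xpos] unfolding S_def q_def by simp
  have dlx: "d * lam * xL = real c * (1 - u)" "d * lam * xH = real c * (1 + u)"
    using xs d by (auto simp: lam_def xL_def xH_def)
  have hL: "\<forall>j<tau. q (Suc j) = q j * ((real c - real j) / (real c * (1 - u)))"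
    using dlx by (simp add: q_def x_def two_price_policy_def)
  have hH: "\<forall>j. tau \<le> j \<longrightarrow> j < c \<longrightarrow> q (Suc j) = q j * ((real c - real j) / (real c * (1 + u)))"
    using dlx by (simp add: q_def x_def two_price_policy_def)
  have q0: "q 0 = 1" by (simp add: q_def)
  note QB = q_bounds[OF q0 hL hH u tau1 tauc tau_cu tauL c2]
  have Spos: "S > 0" using QB(1) cpos by (simp add: S_def)
  define p where "p = steady_state c lam d x"
  have ss: "is_steady_state c lam d x p"
    unfolding p_def by (rule steady_state_qq(2)[OF lam d xpos])
  have p0: "p 0 \<le> 1 / real c"
    using QB(1) Spos cpos q0 by (simp add: p_def ssq S_def field_simps)
  have E: "(\<Sum>i=0..c. real i * p i) \<le> real tau + 3 / u"
  proof -
    have "(\<Sum>i=0..c. real i * p i) = (\<Sum>i=0..c. real i * q i) / S"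
      by (simp add: p_def ssq sum_divide_distrib)
    also have "\<dots> \<le> real tau + 3 / u" using QB(2) Spos by (simp add: S_def divide_le_eq)
    finally show ?thesis .
  qed
  have gl: "\<forall>j\<in>{1..c}. g (x j) \<ge> g xs + g' * (x j - xs) - h"
    using gL gH by (auto simp: x_def two_price_policy_def xL_def xH_def)
  have LL: "lam * g xs - (\<Sum>j=1..c. p j * lam * g (x j))
     \<le> p 0 * lam * g xs + lam * h + g' * (\<Sum>i=0..c. real i * p i) / d"
    by (rule loss_le[OF ss d xs lam_def gl h g'])
  have pl: "perf_loss g c lam d xs x = lam * g xs - (\<Sum>j=1..c. p j * lam * g (x j))"
    by (simp add: perf_loss_def avg_reward_def p_def)
  have b1: "p 0 * lam * g xs \<le> g xs / (xs * d)"
  proof -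
    have "p 0 * (lam * g xs) \<le> (1 / real c) * (lam * g xs)"
      using p0 lam gxs by (intro mult_right_mono) auto
    also have "\<dots> = g xs / (xs * d)" using cpos by (simp add: lam_def)
    finally show ?thesis by (simp add: mult.assoc)
  qed
  have b2: "lam * h = real c * h / (xs * d)" by (simp add: lam_def)
  have b3: "g' * (\<Sum>i=0..c. real i * p i) / d \<le> 8 * g' * ln (real c) / (u * d)"
  proof -
    have "3 / u \<le> 3 * L / u" using L1 u by (intro divide_right_mono) (auto simp: L_def)
    moreover have "8 * L / u = 5 * L / u + 3 * L / u" by (simp add: field_simps)
    ultimately have "real tau + 3 / u \<le> 8 * L / u" using tau_le2 by linarith
    then have "(\<Sum>i=0..c. real i * p i) \<le> 8 * L / u" using E by linarith
    then have "g' * (\<Sum>i=0..c. real i * p i) / d \<le> g' * (8 * L / u) / d"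
      using g' d by (intro divide_right_mono mult_left_mono) auto
    then show ?thesis by (simp add: L_def field_simps)
  qed
  have "xs * (1 - u) \<le> xs * (1 + u)" using xs u by (intro mult_left_mono) auto
  then have b: "xs * (1 - u) \<le> 1" using xH1 by linarith
  have "0 \<le> xs * (1 - u)" "0 \<le> xs * (1 + u)" using xs u by auto
  then have "xL \<in> {0..1}" "xH \<in> {0..1}" using b xH1 by (auto simp: xL_def xH_def)
  moreover have "tau \<in> {1..c}" using tau1 tauc by simp
  moreover have "perf_loss g c (real c / (xs * d)) d xs (two_price_policy xL xH tau)
       \<le> g xs / (xs * d) + real c * h / (xs * d) + 8 * g' * ln (real c) / (u * d)"
    using LL pl b1 b2 b3 unfolding lam_def[symmetric] x_def[symmetric] by linarith
  ultimately show ?thesis by blast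
qed



lemma ev_nat:
  assumes "eventually P (at_top :: real filter)"
  shows "\<exists>c0::nat. \<forall>c\<ge>c0. P (real c)"
proof -
  obtain N where N: "\<forall>x\<ge>N. P x" using assms by (auto simp: eventually_at_top_linorder)
  show ?thesis
  proof (intro exI allI impI)
    fix c :: nat assume "nat \<lceil>N\<rceil> \<le> c"
    then have "N \<le> real c" by linarith
    then show "P (real c)" using N by simp
  qed
qed

lemma powr_ident:
  fixes c a :: real assumes "c > 0" "a \<ge> 0"
  shows "c / (c powr (1 / (a + 1))) powr a = c powr (1 / (a + 1))"
proof -
  have "(c powr (1 / (a + 1))) powr a = c powr (a / (a + 1))" by (simp add: powr_powr)
  moreover have "c = c powr (a / (a + 1)) * c powr (1 / (a + 1))"
    using assms by (simp add: powr_add[symmetric] add_divide_distrib[symmetric])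
  moreover have "c powr (a / (a + 1)) > 0" using assms by simp
  ultimately show ?thesis
    by (metis (no_types, lifting) less_numeral_extra(3) nonzero_mult_div_cancel_left)
qed



theorem theorem2:
  fixes g :: "real \<Rightarrow> real" and xstar d eps k1 g' :: real and alpha :: ereal
  assumes xstar: "0 < xstar" "xstar < 1"
    and d: "0 < d"
    and g_concave: "concave_on {0..1} g"
    and g_mono: "mono_on {0..1} g"
    and g0: "g 0 = 0"
    and eps: "0 < eps" "eps < min xstar (1 - xstar)"
    and alpha: "1 \<le> alpha"
    and k1: "0 \<le> k1"
    and supergrad: "\<forall>x\<in>{0..1}. g x \<le> g xstar + g' * (x - xstar)"
    and g'_pos: "0 < g'"
    and assm1: "\<forall>x\<in>{xstar - eps..xstar + eps}.
         g x \<ge> g xstar + g' * (x - xstar)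
                - (if alpha = \<infinity> then 0 else k1 * \<bar>x - xstar\<bar> powr real_of_ereal alpha)"
  shows "\<exists>K>0. \<exists>c0::nat. \<forall>c::nat. c \<ge> c0 \<longrightarrow>
           (\<exists>xL\<in>{0..1}. \<exists>xH\<in>{0..1}. \<exists>tau\<in>{1..c}.
              perf_loss g c (real c / (xstar * d)) d xstar (two_price_policy xL xH tau)
              \<le> (if alpha = \<infinity> then K * (ln (real c))\<^sup>2
                  else K * real c powr (1 / (real_of_ereal alpha + 1)) * (ln (real c))\<^sup>2))"
proof -
  define u0 where "u0 = min (eps / xstar) (1/2)"
  have u0: "0 < u0" "u0 \<le> 1/2" using eps xstar unfolding u0_def by (auto simp: min_def)
  have u0e: "xstar * u0 \<le> eps"
  proof -
    have "u0 \<le> eps / xstar" by (simp add: u0_def)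
    then show ?thesis using xstar by (simp add: field_simps)
  qed
  have gxs: "g xstar \<ge> 0"
    using mono_onD[OF g_mono, of 0 xstar] xstar g0 by simp
  define a where "a = real_of_ereal alpha"
  define h where "h u = (if alpha = \<infinity> then 0 else k1 * (xstar * u) powr a)" for u
  define A where "A = g xstar / (xstar * d)"
  have A0: "A \<ge> 0" using gxs xstar d by (simp add: A_def)
  have key: "\<exists>xL\<in>{0..1}. \<exists>xH\<in>{0..1}. \<exists>tau\<in>{1..c}.
      perf_loss g c (real c / (xstar * d)) d xstar (two_price_policy xL xH tau)
       \<le> A + real c * h u / (xstar * d) + 8 * g' * ln (real c) / (u * d)"
    if c2: "2 \<le> c" and u: "0 < u" "u \<le> u0" and L1: "1 \<le> ln (real c)"
      and cu: "10 * ln (real c) \<le> real c * u^2" for c :: nat and u :: real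
  proof -
    have "xstar * u \<le> xstar * u0" using u xstar by simp
    then have dl: "xstar * u \<le> eps" using u0e by linarith
    have xH1: "xstar * (1 + u) \<le> 1" using dl eps by (simp add: algebra_simps)
    have h0: "h u \<ge> 0" using k1 by (simp add: h_def)
    have xu: "xstar * u > 0" using xstar u by simp
    have in1: "xstar * (1 - u) \<in> {xstar - eps..xstar + eps}"
      using dl xu by (auto simp: algebra_simps)
    have in2: "xstar * (1 + u) \<in> {xstar - eps..xstar + eps}"
      using dl xu by (auto simp: algebra_simps)
    have ab1: "\<bar>xstar * (1 - u) - xstar\<bar> = xstar * u" using xu by (simp add: algebra_simps)
    have ab2: "\<bar>xstar * (1 + u) - xstar\<bar> = xstar * u" using xu by (simp add: algebra_simps)
    have gL: "g (xstar * (1 - u)) \<ge> g xstar + g' * (xstar * (1 - u) - xstar) - h u"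
      using assm1 in1 ab1 unfolding h_def a_def by fastforce
    have gH: "g (xstar * (1 + u)) \<ge> g xstar + g' * (xstar * (1 + u) - xstar) - h u"
      using assm1 in2 ab2 unfolding h_def a_def by fastforce
    show ?thesis
      using main_bound[OF xstar(1) d gxs _ c2 u(1) _ xH1 L1 cu h0 gL gH] g'_pos u u0
      unfolding A_def by auto
  qed
  have ev1: "eventually (\<lambda>x::real. 3 \<le> x) at_top" by real_asymp
  have ev2: "eventually (\<lambda>x::real. 10 \<le> ln x) at_top" by real_asymp
  have Lsq: "L \<le> L^2" "1 \<le> L^2" if "1 \<le> L" for L :: real
    using that by (auto simp: power2_eq_square intro: order_trans[OF _ mult_right_mono[of 1 L L]] one_le_power)
  show ?thesis
  proof (cases alpha)
    case PInf
    have lim: "((\<lambda>x::real. ln x / x) \<longlongrightarrow> 0) at_top" by real_asymp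
    have ev3: "eventually (\<lambda>x::real. ln x / x < u0^2/10) at_top"
    proof -
      have "0 < u0^2/10" using u0 by simp
      from order_tendstoD(2)[OF lim this] show ?thesis .
    qed
    obtain c0 where c0: "\<forall>c\<ge>c0. 3 \<le> real c \<and> 10 \<le> ln (real c) \<and> ln (real c) / real c < u0^2/10"
      using ev_nat[OF eventually_conj[OF ev1 eventually_conj[OF ev2 ev3]]] by blast
    define B where "B = 8 * g' / (u0 * d)"
    have B0: "B \<ge> 0" using g'_pos u0 d by (simp add: B_def)
    define K where "K = A + B + 1"
    show ?thesis
    proof (intro exI[of _ K] conjI exI[of _ c0] allI impI)
      show "K > 0" using A0 B0 by (simp add: K_def)
      fix c :: nat assume "c0 \<le> c"
      then have cc: "3 \<le> real c" "10 \<le> ln (real c)" "ln (real c) / real c < u0^2/10" using c0 by auto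
      define L where "L = ln (real c)"
      have c2: "2 \<le> c" using cc by simp
      have L1: "1 \<le> L" using cc by (simp add: L_def)
      have cu: "10 * ln (real c) \<le> real c * u0^2" using cc(3) cc(1) by (simp add: field_simps)
      obtain xL xH tau where xx: "xL \<in> {0..1}" "xH \<in> {0..1}" "tau \<in> {1..c}"
        and lo: "perf_loss g c (real c / (xstar * d)) d xstar (two_price_policy xL xH tau)
          \<le> A + real c * h u0 / (xstar * d) + 8 * g' * ln (real c) / (u0 * d)"
        using key[OF c2 u0(1) order_refl _ cu] L1 unfolding L_def by blast
      have h0: "h u0 = 0" using PInf by (simp add: h_def)
      have e3: "8 * g' * ln (real c) / (u0 * d) = B * L" by (simp add: B_def L_def)
      have "A \<le> A * L^2" using A0 Lsq(2)[OF L1] by (simp add: mult_le_cancel_left1)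
      moreover have "B * L \<le> B * L^2" using B0 Lsq(1)[OF L1] by (intro mult_left_mono)
      moreover have "K * L^2 = A * L^2 + B * L^2 + L^2" by (simp add: K_def algebra_simps)
      ultimately have "A + real c * h u0 / (xstar * d) + 8 * g' * ln (real c) / (u0 * d) \<le> K * L^2"
        using h0 e3 Lsq(2)[OF L1] by simp
      then show "\<exists>xL\<in>{0..1}. \<exists>xH\<in>{0..1}. \<exists>tau\<in>{1..c}.
              perf_loss g c (real c / (xstar * d)) d xstar (two_price_policy xL xH tau)
              \<le> (if alpha = \<infinity> then K * (ln (real c))\<^sup>2
                  else K * real c powr (1 / (real_of_ereal alpha + 1)) * (ln (real c))\<^sup>2)"
        using xx lo PInf unfolding L_def by force
    qed
  next
    case MInf then show ?thesis using alpha by simp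
  next
    case (real r)
    have ra: "a = r" "alpha \<noteq> \<infinity>" "real_of_ereal alpha = r" using real by (auto simp: a_def)
    have r1: "1 \<le> r" using alpha real by simp
    define \<beta> where "\<beta> = 1 / (r + 1)"
    have \<beta>: "0 < \<beta>" "\<beta> \<le> 1/2" using r1 by (auto simp: \<beta>_def field_simps)
    define M where "M = k1 * xstar powr (r - 1) / d"
    have M0: "M \<ge> 0" using k1 d by (simp add: M_def)
    define G where "G = 8 * g' / d"
    have G0: "G \<ge> 0" using g'_pos d by (simp add: G_def)
    define K where "K = A + M + G + 1"
    have K0: "K > 0" using A0 M0 G0 by (simp add: K_def)
    have hu: "h u = k1 * (xstar * u) powr r" for u using ra by (simp add: h_def)
    have fin: "A + T2 + T3 \<le> K * C * L^2"
      if "1 \<le> L" "1 \<le> C" "T2 \<le> M * C * L^2" "T3 \<le> G * C * L^2" for L C T2 T3 :: real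
    proof -
      have CL: "1 \<le> C * L^2" using that(1,2) Lsq(2)[OF that(1)] by (metis mult_mono' mult_1 zero_le_one)
      have "A \<le> A * (C * L^2)" using A0 CL by (simp add: mult_le_cancel_left1)
      moreover have "K * C * L^2 = A * (C * L^2) + M * C * L^2 + G * C * L^2 + C * L^2"
        by (simp add: K_def algebra_simps)
      ultimately show ?thesis using that CL by linarith
    qed
    have xsp: "xstar powr r / xstar = xstar powr (r - 1)"
      using xstar by (simp add: powr_diff)
    have concl: "\<exists>xL\<in>{0..1}. \<exists>xH\<in>{0..1}. \<exists>tau\<in>{1..c}.
              perf_loss g c (real c / (xstar * d)) d xstar (two_price_policy xL xH tau)
              \<le> (if alpha = \<infinity> then K * (ln (real c))\<^sup>2
                  else K * real c powr (1 / (real_of_ereal alpha + 1)) * (ln (real c))\<^sup>2)"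
      if c2: "2 \<le> c" and u: "0 < u" "u \<le> u0" and L1: "1 \<le> ln (real c)"
        and cu: "10 * ln (real c) \<le> real c * u^2"
        and C1: "1 \<le> real c powr \<beta>"
        and T2: "real c * h u / (xstar * d) \<le> M * real c powr \<beta> * (ln (real c))^2"
        and T3: "8 * g' * ln (real c) / (u * d) \<le> G * real c powr \<beta> * (ln (real c))^2"
      for c :: nat and u :: real
    proof -
      obtain xL xH tau where xx: "xL \<in> {0..1}" "xH \<in> {0..1}" "tau \<in> {1..c}"
        and lo: "perf_loss g c (real c / (xstar * d)) d xstar (two_price_policy xL xH tau)
          \<le> A + real c * h u / (xstar * d) + 8 * g' * ln (real c) / (u * d)"
        using key[OF c2 u L1 cu] by blast
      have "A + real c * h u / (xstar * d) + 8 * g' * ln (real c) / (u * d) \<le> K * real c powr \<beta> * (ln (real c))^2"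
        by (rule fin[OF L1 C1 T2 T3])
      then show ?thesis using xx lo ra unfolding \<beta>_def by force
    qed
    show ?thesis
    proof (cases "r \<le> 2")
      case True
      have lim: "((\<lambda>x::real. ln x / x powr (1/3)) \<longlongrightarrow> 0) at_top" by real_asymp
      have ev3: "eventually (\<lambda>x::real. ln x / x powr (1/3) < u0) at_top"
        using order_tendstoD(2)[OF lim u0(1)] .
      obtain c0 where c0: "\<forall>c\<ge>c0. 3 \<le> real c \<and> 10 \<le> ln (real c) \<and> ln (real c) / real c powr (1/3) < u0"
        using ev_nat[OF eventually_conj[OF ev1 eventually_conj[OF ev2 ev3]]] by blast
      show ?thesis
      proof (intro exI[of _ K] conjI exI[of _ c0] allI impI)
        show "K > 0" by (rule K0)
        fix c :: nat assume "c0 \<le> c"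
        then have cc: "3 \<le> real c" "10 \<le> ln (real c)" "ln (real c) / real c powr (1/3) < u0" using c0 by auto
        define L where "L = ln (real c)"
        define C where "C = real c powr \<beta>"
        have c2: "2 \<le> c" using cc by simp
        have L1: "1 \<le> L" using cc by (simp add: L_def)
        have b3: "1/3 \<le> \<beta>" using True r1 by (simp add: \<beta>_def field_simps)
        have c13: "real c powr (1/3) \<le> C" unfolding C_def using b3 cc by (intro powr_mono) auto
        have c13p: "real c powr (1/3) > 0" using cc by simp
        have C1: "1 \<le> C" unfolding C_def using cc \<beta> by (intro ge_one_powr_ge_zero) auto
        define u where "u = L / C"
        have up: "0 < u" using L1 C1 by (simp add: u_def)
        have "u \<le> L / real c powr (1/3)" unfolding u_def
        proof (rule divide_left_mono)
          show "0 \<le> L" using L1 by simp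
          show "real c powr (1/3) \<le> C" by (rule c13)
          show "0 < C * real c powr (1/3)" using C1 c13p by simp
        qed
        then have uu: "u \<le> u0" using cc(3) unfolding L_def by linarith
        have C2: "C^2 = real c powr (2 * \<beta>)"
          unfolding C_def by (simp add: power2_eq_square powr_add[symmetric])
        have "real c powr (2 * \<beta>) \<le> real c powr 1" using \<beta> cc by (intro powr_mono) auto
        then have C2c: "C^2 \<le> real c" using C2 cc by simp
        have "L^2 \<le> real c * u^2"
        proof -
          have "real c * u^2 = L^2 * (real c / C^2)" by (simp add: u_def power_divide)
          moreover have "1 \<le> real c / C^2" using C2c C1 by simp
          moreover have "L^2 \<ge> 0" by simp
          ultimately show ?thesis using mult_left_mono[of 1 "real c / C^2" "L^2"] by simp
        qed
        moreover have "10 * L \<le> L^2" using cc by (simp add: L_def power2_eq_square)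
        ultimately have cu: "10 * ln (real c) \<le> real c * u^2" unfolding L_def by linarith
        have T2: "real c * h u / (xstar * d) \<le> M * C * L^2"
        proof -
          have "h u = k1 * (xstar powr r * (L powr r / C powr r))"
            by (simp add: hu u_def powr_mult powr_divide)
          moreover have "C powr r > 0" using C1 by simp
          ultimately have "real c * h u / (xstar * d) = k1 / d * (xstar powr r / xstar) * L powr r * (real c / C powr r)"
            using xstar d by (simp add: field_simps)
          also have "real c / C powr r = C" unfolding C_def \<beta>_def by (rule powr_ident) (use cc r1 in auto)
          also have "k1 / d * (xstar powr r / xstar) * L powr r * C = M * C * L powr r"
            unfolding xsp M_def by simp
          also have "\<dots> \<le> M * C * L powr 2"
            using True L1 M0 C1 by (intro mult_left_mono powr_mono) auto
          also have "L powr 2 = L^2" using L1 by simp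
          finally show ?thesis .
        qed
        have T3: "8 * g' * ln (real c) / (u * d) \<le> G * C * L^2"
        proof -
          have Lp: "L > 0" "C > 0" using L1 C1 by auto
          have "8 * g' * L / (u * d) = G * C" unfolding u_def G_def using Lp d by (simp add: field_simps)
          then have "8 * g' * ln (real c) / (u * d) = G * C" unfolding L_def .
          also have "\<dots> \<le> G * C * L^2" using G0 C1 Lsq(2)[OF L1] mult_left_mono[of 1 "L^2" "G * C"] by simp
          finally show ?thesis .
        qed
        show "\<exists>xL\<in>{0..1}. \<exists>xH\<in>{0..1}. \<exists>tau\<in>{1..c}.
              perf_loss g c (real c / (xstar * d)) d xstar (two_price_policy xL xH tau)
              \<le> (if alpha = \<infinity> then K * (ln (real c))\<^sup>2
                  else K * real c powr (1 / (real_of_ereal alpha + 1)) * (ln (real c))\<^sup>2)"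
          using concl[OF c2 up uu _ cu] L1 C1 T2 T3 unfolding L_def C_def by blast
      qed
    next
      case False
      have ev3: "eventually (\<lambda>x::real. 10 * ln x \<le> x powr (1/3)) at_top" by real_asymp
      have ev4: "eventually (\<lambda>x::real. 1 / u0 \<le> x powr \<beta>) at_top"
        using real_powr_at_top[OF \<beta>(1)] unfolding filterlim_at_top by blast
      obtain c0 where c0: "\<forall>c\<ge>c0. 3 \<le> real c \<and> 10 \<le> ln (real c) \<and> 10 * ln (real c) \<le> real c powr (1/3)
            \<and> 1 / u0 \<le> real c powr \<beta>"
        using ev_nat[OF eventually_conj[OF ev1 eventually_conj[OF ev2 eventually_conj[OF ev3 ev4]]]] by blast
      show ?thesis
      proof (intro exI[of _ K] conjI exI[of _ c0] allI impI)
        show "K > 0" by (rule K0)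
        fix c :: nat assume "c0 \<le> c"
        then have cc: "3 \<le> real c" "10 \<le> ln (real c)" "10 * ln (real c) \<le> real c powr (1/3)"
            "1 / u0 \<le> real c powr \<beta>" using c0 by auto
        define L where "L = ln (real c)"
        define C where "C = real c powr \<beta>"
        have c2: "2 \<le> c" using cc by simp
        have L1: "1 \<le> L" using cc by (simp add: L_def)
        have b3: "\<beta> \<le> 1/3" using False by (simp add: \<beta>_def field_simps)
        have C1: "1 \<le> C" unfolding C_def using cc \<beta> by (intro ge_one_powr_ge_zero) auto
        define u where "u = 1 / C"
        have up: "0 < u" using C1 by (simp add: u_def)
        have uu: "u \<le> u0"
        proof -
          have "1 / u0 \<le> C" using cc(4) by (simp add: C_def)
          then show ?thesis using u0 C1 by (simp add: u_def field_simps)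
        qed
        have C2: "C^2 = real c powr (2 * \<beta>)"
          unfolding C_def by (simp add: power2_eq_square powr_add[symmetric])
        have "real c * u^2 = real c / C^2" by (simp add: u_def power_divide)
        also have "\<dots> = real c powr (1 - 2 * \<beta>)"
          unfolding C2 using cc by (simp add: powr_diff)
        also have "\<dots> \<ge> real c powr (1/3)" using b3 cc by (intro powr_mono) auto
        finally have cu: "10 * ln (real c) \<le> real c * u^2" using cc(3) by linarith
        have T2: "real c * h u / (xstar * d) \<le> M * C * L^2"
        proof -
          have "h u = k1 * (xstar powr r / C powr r)"
            by (simp add: hu u_def powr_mult powr_divide)
          moreover have "C powr r > 0" using C1 by simp
          ultimately have "real c * h u / (xstar * d) = k1 / d * (xstar powr r / xstar) * (real c / C powr r)"
            using xstar d by (simp add: field_simps)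
          also have "real c / C powr r = C" unfolding C_def \<beta>_def by (rule powr_ident) (use cc r1 in auto)
          also have "k1 / d * (xstar powr r / xstar) * C = M * C"
            unfolding xsp M_def by simp
          also have "\<dots> \<le> M * C * L^2"
            using M0 C1 Lsq(2)[OF L1] mult_left_mono[of 1 "L^2" "M * C"] by simp
          finally show ?thesis .
        qed
        have T3: "8 * g' * ln (real c) / (u * d) \<le> G * C * L^2"
        proof -
          have Lp: "L > 0" "C > 0" using L1 C1 by auto
          have "8 * g' * L / (u * d) = G * C * L" unfolding u_def G_def using Lp d by (simp add: field_simps)
          also have "\<dots> \<le> G * C * L^2"
            using G0 C1 Lsq(1)[OF L1] by (intro mult_left_mono) auto
          finally show ?thesis unfolding L_def .
        qed
        show "\<exists>xL\<in>{0..1}. \<exists>xH\<in>{0..1}. \<exists>tau\<in>{1..c}.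
              perf_loss g c (real c / (xstar * d)) d xstar (two_price_policy xL xH tau)
              \<le> (if alpha = \<infinity> then K * (ln (real c))\<^sup>2
                  else K * real c powr (1 / (real_of_ereal alpha + 1)) * (ln (real c))\<^sup>2)"
          using concl[OF c2 up uu _ cu] L1 C1 T2 T3 unfolding L_def C_def by blast
      qed
    qed
  qed
qed


end
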